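(* Let $2\le r_1<r_2$ be integers and $n$ such that $h_0:=n-5-2(r_1+r_2)\ge 3$. For every $j=0,1,\dots,h_0-3$, $$\rho([2,\,h_0-j,\,2+j])>\rho([h_0-(j+1),\,2,\,2+(j+1)]).$$ Equivalently, with $T^*=[h_0,2,2]$, $\alpha([h,q_1,q_2])=[h-1,q_1+1,q_2]$ and $\gamma([h,q_1,q_2])=[h-1,q_1,q_2+1]$, one has $\rho(\alpha^{h_0-j-2}(\gamma^j(T^* )))>\rho(\gamma^{j+1}(T^* ))$.
   Context: $\rho(G)$ denotes the spectral radius (largest eigenvalue of the adjacency matrix) of a graph $G$. For integers $h,q_1,q_2\ge 2$ and fixed integers $2\le r_1<r_2$, the tree $[h,q_1,q_2]$ is constructed as follows: take a vertex $u$; attach to $u$ a pendant path with $h$ edges; attach to $u$ a path with $q_1$ edges ending at a vertex $v_1$, and attach to $v_1$ exactly $r_1$ pendant paths with $2$ edges each; attach to $u$ a path with $q_2$ edges ending at a vertex $v_2$, and attach to $v_2$ exactly $r_2$ pendant paths with $2$ edges each. It has $n=1+h+q_1+q_2+2(r_1+r_2)$ vertices. $\mathfrak{F}(n)$ is the set of all such trees with $h,q_1,q_2\ge2$ and $h+q_1+q_2=n-1-2(r_1+r_2)$. *)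

theory Defs
  imports "Jordan_Normal_Form.Char_Poly"
begin

definition adj_mat :: "nat \<Rightarrow> (nat \<times> nat) set \<Rightarrow> real mat" where
  "adj_mat N E = mat N N (\<lambda>(i,j). if (i,j) \<in> E \<or> (j,i) \<in> E then 1 else 0)"

definition spec_rad :: "nat \<Rightarrow> (nat \<times> nat) set \<Rightarrow> real" where
  "spec_rad N E = Max {x. eigenvalue (adj_mat N E) x}"

definition path_edges :: "nat \<Rightarrow> nat \<Rightarrow> (nat \<times> nat) set" where
  "path_edges a b = {(i, i+1) | i. a \<le> i \<and> i < b}"

text \<open>The tree [h,q1,q2] (with parameters r1, r2).
  u = 0; pendant path 0,1,...,h; path 0, h+1, ..., h+q1 = v1;
  path 0, h+q1+1, ..., h+q1+q2 = v2; then r1 pendant paths of length 2 at v1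
  and r2 pendant paths of length 2 at v2.\<close>
definition tree_edges :: "nat \<Rightarrow> nat \<Rightarrow> nat \<Rightarrow> nat \<Rightarrow> nat \<Rightarrow> (nat \<times> nat) set" where
  "tree_edges r1 r2 h q1 q2 =
     (let v1 = h + q1; v2 = h + q1 + q2; b = h + q1 + q2 + 1; c = b + 2 * r1 in
      path_edges 0 h
      \<union> {(0, h + 1)} \<union> path_edges (h + 1) v1
      \<union> {(0, v1 + 1)} \<union> path_edges (v1 + 1) v2
      \<union> {(v1, b + 2 * k) | k. k < r1} \<union> {(b + 2 * k, b + 2 * k + 1) | k. k < r1}
      \<union> {(v2, c + 2 * k) | k. k < r2} \<union> {(c + 2 * k, c + 2 * k + 1) | k. k < r2})"

definition tree_order :: "nat \<Rightarrow> nat \<Rightarrow> nat \<Rightarrow> nat \<Rightarrow> nat \<Rightarrow> nat" where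
  "tree_order r1 r2 h q1 q2 = 1 + h + q1 + q2 + 2 * (r1 + r2)"

definition rho_tree :: "nat \<Rightarrow> nat \<Rightarrow> nat \<Rightarrow> nat \<Rightarrow> nat \<Rightarrow> real" where
  "rho_tree r1 r2 h q1 q2 = spec_rad (tree_order r1 r2 h q1 q2) (tree_edges r1 r2 h q1 q2)"

end

theory Submission
  imports Defs
begin

lemma adj_mat_carrier: "adj_mat N E \<in> carrier_mat N N"
  by (simp add: adj_mat_def)

lemma adj_mat_nonneg: "i < N \<Longrightarrow> j < N \<Longrightarrow> adj_mat N E $$ (i,j) \<ge> 0"
  by (simp add: adj_mat_def)

lemma finite_eigs:
  fixes A :: "real mat"
  assumes A: "A \<in> carrier_mat N N"
  shows "finite {x. eigenvalue A x}"
proof -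
  have "char_poly A \<noteq> 0" using degree_monic_char_poly[OF A] by auto
  hence "finite {x. poly (char_poly A) x = 0}" by (rule poly_roots_finite)
  thus ?thesis using eigenvalue_root_char_poly[OF A] by simp
qed

lemma collatz_upper:
  fixes A :: "real mat"
  assumes A: "A \<in> carrier_mat N N"
    and nn: "\<And>i j. i < N \<Longrightarrow> j < N \<Longrightarrow> A $$ (i,j) \<ge> 0"
    and y: "y \<in> carrier_vec N" and ypos: "\<And>i. i < N \<Longrightarrow> y $ i > 0"
    and Ay: "\<And>i. i < N \<Longrightarrow> (A *\<^sub>v y) $ i \<le> \<beta> * y $ i"
    and ev: "eigenvalue A \<mu>"
  shows "\<mu> \<le> \<bar>\<mu>\<bar>" "\<bar>\<mu>\<bar> \<le> \<beta>"
proof -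
  show "\<mu> \<le> \<bar>\<mu>\<bar>" by simp
  from ev obtain v where v: "v \<in> carrier_vec N" "v \<noteq> 0\<^sub>v N" "A *\<^sub>v v = \<mu> \<cdot>\<^sub>v v"
    unfolding eigenvalue_def eigenvector_def using A by auto
  define g where "g i = \<bar>v $ i\<bar> / y $ i" for i
  have Nne: "{..<N} \<noteq> {}"
  proof
    assume "{..<N} = {}" hence "N = 0" by auto
    thus False using v by auto
  qed
  have fin: "finite (g ` {..<N})" by simp
  have ne: "g ` {..<N} \<noteq> {}" using Nne by simp
  obtain i0 where i0a: "i0 < N" "g i0 = Max (g ` {..<N})"
    using Max_in[OF fin ne] by auto
  have i0: "i0 < N" "\<And>i. i < N \<Longrightarrow> g i \<le> g i0"
    using i0a Max_ge[OF fin] by auto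
  have "\<exists>i<N. v $ i \<noteq> 0"
  proof (rule ccontr)
    assume "\<not> ?thesis"
    hence "v = 0\<^sub>v N" using v(1) by (intro eq_vecI) auto
    thus False using v(2) by simp
  qed
  then obtain i1 where i1: "i1 < N" "v $ i1 \<noteq> 0" by auto
  have "g i1 > 0" using i1 ypos[OF i1(1)] by (simp add: g_def)
  hence cpos: "g i0 > 0" using i0(2)[OF i1(1)] by simp
  have vi0: "\<bar>v $ i0\<bar> = g i0 * y $ i0" using ypos[OF i0(1)] by (simp add: g_def)
  have bound: "\<bar>v $ j\<bar> \<le> g i0 * y $ j" if "j < N" for j
    using i0(2)[OF that] ypos[OF that] by (simp add: g_def field_simps)
  have "\<bar>\<mu>\<bar> * \<bar>v $ i0\<bar> = \<bar>(A *\<^sub>v v) $ i0\<bar>" using v(3) i0(1) v(1) by (simp add: abs_mult)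
  also have "(A *\<^sub>v v) $ i0 = (\<Sum>j<N. A $$ (i0,j) * v $ j)"
    using A v(1) i0(1) by (simp add: mult_mat_vec_def scalar_prod_def row_def lessThan_atLeast0)
  also have "\<bar>\<dots>\<bar> \<le> (\<Sum>j<N. \<bar>A $$ (i0,j) * v $ j\<bar>)" by (rule sum_abs)
  also have "\<dots> \<le> (\<Sum>j<N. A $$ (i0,j) * (g i0 * y $ j))"
    apply (rule sum_mono)
    using nn[OF i0(1)] bound by (simp add: abs_mult mult_left_mono)
  also have "\<dots> = g i0 * (\<Sum>j<N. A $$ (i0,j) * y $ j)"
    by (simp add: sum_distrib_left algebra_simps)
  also have "(\<Sum>j<N. A $$ (i0,j) * y $ j) = (A *\<^sub>v y) $ i0"
    using A y i0(1) by (simp add: mult_mat_vec_def scalar_prod_def row_def lessThan_atLeast0)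
  also have "g i0 * \<dots> \<le> g i0 * (\<beta> * y $ i0)"
    using Ay[OF i0(1)] cpos by (simp add: mult_left_mono)
  also have "\<dots> = \<beta> * \<bar>v $ i0\<bar>" using vi0 by simp
  finally have "\<bar>\<mu>\<bar> * \<bar>v $ i0\<bar> \<le> \<beta> * \<bar>v $ i0\<bar>" .
  moreover have "\<bar>v $ i0\<bar> > 0" using vi0 cpos ypos[OF i0(1)] by simp
  ultimately show "\<bar>\<mu>\<bar> \<le> \<beta>" by simp
qed

definition lam :: "real \<Rightarrow> real" where "lam t = t + 1/t"
definition pth :: "real \<Rightarrow> nat \<Rightarrow> real" where "pth t k = t^(k+1) - 1/t^(k+1)"
definition pc :: "nat \<Rightarrow> real \<Rightarrow> real" where "pc r t = t^4 - (real r - 1)*(t^2+1)"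
definition qc :: "nat \<Rightarrow> real \<Rightarrow> real" where "qc r t = (real r - 1)*(t^2+1) - 1/t^2"
definition sg :: "nat \<Rightarrow> real \<Rightarrow> nat \<Rightarrow> real" where "sg r t k = pc r t * t^k + qc r t / t^k"
definition lf :: "real \<Rightarrow> real" where "lf t = t^2 - 1"
definition md :: "real \<Rightarrow> real" where "md t = t^3 - 1/t"

lemma pth_rec: assumes "t \<noteq> 0" shows "pth t k + pth t (Suc (Suc k)) = lam t * pth t (Suc k)"
  using assms by (simp add: pth_def lam_def field_simps)

lemma pth_0: assumes "t \<noteq> 0" shows "pth t 1 = lam t * pth t 0"
  using assms by (simp add: pth_def lam_def field_simps power2_eq_square)

lemma sg_rec: assumes "t \<noteq> 0" shows "sg r t k + sg r t (Suc (Suc k)) = lam t * sg r t (Suc k)"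
  using assms by (simp add: sg_def lam_def field_simps)

lemma sg_v: assumes "t \<noteq> 0" shows "sg r t 1 + real r * md t = lam t * sg r t 0"
  using assms by (simp add: sg_def pc_def qc_def md_def lam_def field_simps power2_eq_square power3_eq_cube)
    (simp add: algebra_simps numeral_eq_Suc)

lemma md_eq: assumes "t \<noteq> 0" shows "sg r t 0 + lf t = lam t * md t"
  using assms by (simp add: sg_def pc_def qc_def md_def lf_def lam_def field_simps power2_eq_square power3_eq_cube)
    (simp add: algebra_simps numeral_eq_Suc)

lemma lf_eq: assumes "t \<noteq> 0" shows "md t = lam t * lf t"
  using assms by (simp add: md_def lf_def lam_def field_simps power2_eq_square power3_eq_cube)


lemma tree_edges_mem: "(a,b) \<in> tree_edges r s h q1 q2 \<longleftrightarrow>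
  (a < h \<and> b = a+1) \<or> (a = 0 \<and> b = h+1) \<or> (h+1 \<le> a \<and> a < h+q1 \<and> b = a+1) \<or>
  (a = 0 \<and> b = h+q1+1) \<or> (h+q1+1 \<le> a \<and> a < h+q1+q2 \<and> b = a+1) \<or>
  (a = h+q1 \<and> (\<exists>k<r. b = h+q1+q2+1+2*k)) \<or> (\<exists>k<r. a = h+q1+q2+1+2*k \<and> b = a+1) \<or>
  (a = h+q1+q2 \<and> (\<exists>k<s. b = h+q1+q2+1+2*r+2*k)) \<or> (\<exists>k<s. a = h+q1+q2+1+2*r+2*k \<and> b = a+1)"
  unfolding tree_edges_def path_edges_def Let_def by (simp only: Un_iff mem_Collect_eq singleton_iff prod.inject) blast

locale tctx = fixes r s h q1 q2 :: nat
  assumes h1: "h \<ge> 1" and q1: "q1 \<ge> 2" and q2: "q2 \<ge> 2"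
begin
abbreviation "V1 \<equiv> h+q1"
abbreviation "V2 \<equiv> h+q1+q2"
abbreviation "BB \<equiv> h+q1+q2+1"
abbreviation "CC \<equiv> h+q1+q2+1+2*r"
abbreviation "NN \<equiv> h+q1+q2+1+2*r+2*s"
definition adjp where "adjp i j \<longleftrightarrow> (i,j) \<in> tree_edges r s h q1 q2 \<or> (j,i) \<in> tree_edges r s h q1 q2"

lemma adjp_iff: "adjp i j \<longleftrightarrow> 
  ((i < h \<and> j = i+1) \<or> (i = 0 \<and> j = h+1) \<or> (h+1 \<le> i \<and> i < V1 \<and> j = i+1) \<or>
  (i = 0 \<and> j = V1+1) \<or> (V1+1 \<le> i \<and> i < V2 \<and> j = i+1) \<or>
  (i = V1 \<and> (\<exists>k<r. j = BB+2*k)) \<or> (\<exists>k<r. i = BB+2*k \<and> j = i+1) \<or>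
  (i = V2 \<and> (\<exists>k<s. j = CC+2*k)) \<or> (\<exists>k<s. i = CC+2*k \<and> j = i+1)) \<or>
  ((j < h \<and> i = j+1) \<or> (j = 0 \<and> i = h+1) \<or> (h+1 \<le> j \<and> j < V1 \<and> i = j+1) \<or>
  (j = 0 \<and> i = V1+1) \<or> (V1+1 \<le> j \<and> j < V2 \<and> i = j+1) \<or>
  (j = V1 \<and> (\<exists>k<r. i = BB+2*k)) \<or> (\<exists>k<r. j = BB+2*k \<and> i = j+1) \<or>
  (j = V2 \<and> (\<exists>k<s. i = CC+2*k)) \<or> (\<exists>k<s. j = CC+2*k \<and> i = j+1))"
  unfolding adjp_def tree_edges_mem ..


lemma nb0: "{j. j < NN \<and> adjp 0 j} = {1, h+1, V1+1}"
  using h1 q1 q2 unfolding adjp_iff by auto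

lemma nb_h_inner: "0 < i \<Longrightarrow> i < h \<Longrightarrow> {j. j < NN \<and> adjp i j} = {i-1, i+1}"
  using h1 q1 q2 unfolding adjp_iff by auto


lemma nb_h_end: "{j. j < NN \<and> adjp h j} = {h-1}"
  using h1 q1 q2 unfolding adjp_iff by auto

lemma nb_r_first: "{j. j < NN \<and> adjp (h+1) j} = {0, h+2}"
  using h1 q1 q2 unfolding adjp_iff by auto

lemma nb_r_inner: "h+1 < i \<Longrightarrow> i < V1 \<Longrightarrow> {j. j < NN \<and> adjp i j} = {i-1, i+1}"
  using h1 q1 q2 unfolding adjp_iff by auto

lemma nb_v1: "{j. j < NN \<and> adjp V1 j} = insert (V1 - 1) ((\<lambda>k. BB+2*k) ` {..<r})"
  using h1 q1 q2 unfolding adjp_iff by auto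

lemma nb_s_first: "{j. j < NN \<and> adjp (V1+1) j} = {0, V1+2}"
  using h1 q1 q2 unfolding adjp_iff by auto

lemma nb_s_inner: "V1+1 < i \<Longrightarrow> i < V2 \<Longrightarrow> {j. j < NN \<and> adjp i j} = {i-1, i+1}"
  using h1 q1 q2 unfolding adjp_iff by auto

lemma nb_v2: "{j. j < NN \<and> adjp V2 j} = insert (V2 - 1) ((\<lambda>k. CC+2*k) ` {..<s})"
  using h1 q1 q2 unfolding adjp_iff by auto

lemma nb_rmid: "k < r \<Longrightarrow> {j. j < NN \<and> adjp (BB+2*k) j} = {V1, BB+2*k+1}"
  using h1 q1 q2 unfolding adjp_iff by (auto; presburger)

lemma nb_rleaf: "k < r \<Longrightarrow> {j. j < NN \<and> adjp (BB+2*k+1) j} = {BB+2*k}"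
  using h1 q1 q2 unfolding adjp_iff by (auto; presburger)

lemma nb_smid: "k < s \<Longrightarrow> {j. j < NN \<and> adjp (CC+2*k) j} = {V2, CC+2*k+1}"
  using h1 q1 q2 unfolding adjp_iff by (auto; presburger)

lemma nb_sleaf: "k < s \<Longrightarrow> {j. j < NN \<and> adjp (CC+2*k+1) j} = {CC+2*k}"
  using h1 q1 q2 unfolding adjp_iff by (auto; presburger)

end

context tctx begin

definition tval :: "real \<Rightarrow> nat \<Rightarrow> real" where
 "tval t i = (if i \<le> h then pth t (h-i) * sg r t q1 * sg s t q2
   else if i \<le> V1 then sg r t (V1-i) * pth t h * sg s t q2
   else if i \<le> V2 then sg s t (V2-i) * pth t h * sg r t q1
   else if i < CC then (if even (i-BB) then md t else lf t) * pth t h * sg s t q2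
   else (if even (i-CC) then md t else lf t) * pth t h * sg r t q1)"

definition tvec :: "real \<Rightarrow> real vec" where "tvec t = vec NN (tval t)"

lemma order_eq: "tree_order r s h q1 q2 = NN" by (simp add: tree_order_def)

lemma row_sum: assumes i: "i < NN"
  shows "(adj_mat NN (tree_edges r s h q1 q2) *\<^sub>v tvec t) $ i = sum (tval t) {j. j < NN \<and> adjp i j}"
proof -
  have "(adj_mat NN (tree_edges r s h q1 q2) *\<^sub>v tvec t) $ i
      = (\<Sum>j\<in>{0..<NN}. (if adjp i j then 1 else 0) * tval t j)"
    using i by (simp add: adj_mat_def mult_mat_vec_def scalar_prod_def tvec_def adjp_def)
  also have "\<dots> = (\<Sum>j\<in>{0..<NN}. (if adjp i j then tval t j else 0))"
    by (rule sum.cong) auto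
  also have "\<dots> = sum (tval t) {j \<in> {0..<NN}. adjp i j}"
    by (rule sym, rule sum.inter_filter) simp
  also have "{j \<in> {0..<NN}. adjp i j} = {j. j < NN \<and> adjp i j}" by auto
  finally show ?thesis .
qed

lemma lin3: "a + b = l * (c::real) \<Longrightarrow> a * y * z + b * y * z = l * (c * y * z)"
proof -
  assume a: "a + b = l * c"
  have "a * y * z + b * y * z = (a + b) * y * z" by (simp add: algebra_simps)
  also have "\<dots> = l * (c * y * z)" using a by simp
  finally show ?thesis .
qed

lemma tv_h: "i \<le> h \<Longrightarrow> tval t i = pth t (h-i) * sg r t q1 * sg s t q2"
  by (simp add: tval_def)
lemma tv_r: "h < i \<Longrightarrow> i \<le> V1 \<Longrightarrow> tval t i = sg r t (V1-i) * pth t h * sg s t q2"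
  by (simp add: tval_def)
lemma tv_s: "V1 < i \<Longrightarrow> i \<le> V2 \<Longrightarrow> tval t i = sg s t (V2-i) * pth t h * sg r t q1"
  by (simp add: tval_def)
lemma tv_rm: "k < r \<Longrightarrow> tval t (BB+2*k) = md t * pth t h * sg s t q2"
  by (simp add: tval_def)
lemma tv_rl: "k < r \<Longrightarrow> tval t (BB+2*k+1) = lf t * pth t h * sg s t q2"
  by (simp add: tval_def)
lemma tv_sm: "k < s \<Longrightarrow> tval t (CC+2*k) = md t * pth t h * sg r t q1"
  by (simp add: tval_def)
lemma tv_sl: "k < s \<Longrightarrow> tval t (CC+2*k+1) = lf t * pth t h * sg r t q1"
  by (simp add: tval_def)

lemma eig_eq:
  assumes t: "t \<noteq> 0"
    and ueq: "tval t 1 + tval t (h+1) + tval t (V1+1) = lam t * tval t 0"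
    and i: "i < NN"
  shows "sum (tval t) {j. j < NN \<and> adjp i j} = lam t * tval t i"
proof -
  have disj: "i < BB \<or> (BB \<le> i \<and> i < CC) \<or> CC \<le> i" by arith
  consider (u) "i = 0" | (hin) "0 < i" "i < h" | (hend) "i = h" | (rf) "i = h+1"
    | (rin) "h+1 < i" "i < V1" | (v1) "i = V1" | (sf) "i = V1+1" | (sin) "V1+1 < i" "i < V2"
    | (v2) "i = V2" | (rm) k where "k < r" "i = BB+2*k" | (rl) k where "k<r" "i = BB+2*k+1"
    | (sm) k where "k<s" "i = CC+2*k" | (sl) k where "k<s" "i=CC+2*k+1"
  proof -
    from disj consider "i < BB" | "BB \<le> i \<and> i < CC" | "CC \<le> i" by blast
    then show thesis
    proof cases
      case 1
      then show ?thesis using that(1-9) by linarith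
    next
      case 2
      define k where "k = (i - BB) div 2"
      have "i = BB + 2*k \<or> i = BB+2*k+1" unfolding k_def using 2 by presburger
      moreover have "k < r" unfolding k_def using 2 by linarith
      ultimately show ?thesis using that(10,11) by blast
    next
      case 3
      define k where "k = (i - CC) div 2"
      have "i = CC + 2*k \<or> i = CC+2*k+1" unfolding k_def using 3 by presburger
      moreover have "k < s" unfolding k_def using 3 i by linarith
      ultimately show ?thesis using that(12,13) by blast
    qed
  qed
  then show ?thesis
  proof cases
    case u
    have d: "1 \<noteq> h+1" "1 \<noteq> V1+1" "h+1 \<noteq> V1+1" using h1 q1 by auto
    have "sum (tval t) {j. j < NN \<and> adjp i j} = tval t 1 + tval t (h+1) + tval t (V1+1)"
      unfolding u nb0 using d by (simp add: add.assoc)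
    then show ?thesis using u ueq by simp
  next
    case hin
    obtain k where k: "h - (i+1) = k" by simp
    have e1: "h - i = Suc k" "h - (i - 1) = Suc (Suc k)" using hin k by auto
    have ti: "tval t i = pth t (Suc k) * sg r t q1 * sg s t q2"
      using tv_h[of i] hin e1 by simp
    have "sum (tval t) {j. j < NN \<and> adjp i j} = tval t (i-1) + tval t (i+1)"
      unfolding nb_h_inner[OF hin] using hin by simp
    also have "tval t (i-1) = pth t (Suc (Suc k)) * sg r t q1 * sg s t q2"
      using tv_h[of "i-1"] hin e1 by simp
    also have "tval t (i+1) = pth t k * sg r t q1 * sg s t q2"
      using tv_h[of "i+1"] hin k by simp
    finally show ?thesis using ti lin3[OF pth_rec[OF t, of k]] by (simp add: add.commute)
  next
    case hend
    have ti: "tval t i = pth t 0 * sg r t q1 * sg s t q2"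
      using tv_h[of i] hend by simp
    have "sum (tval t) {j. j < NN \<and> adjp i j} = tval t (h-1)"
      unfolding hend nb_h_end by simp
    also have "\<dots> = pth t 1 * sg r t q1 * sg s t q2"
      using tv_h[of "h-1"] h1 by simp
    finally show ?thesis using ti pth_0[OF t] by simp
  next
    case rf
    obtain k where k: "q1 - 2 = k" by simp
    have e1: "q1 = Suc (Suc k)" using q1 k by auto
    have ti: "tval t i = sg r t (Suc k) * pth t h * sg s t q2"
      using tv_r[of i] rf e1 by simp
    have "sum (tval t) {j. j < NN \<and> adjp i j} = tval t 0 + tval t (h+2)"
      unfolding rf nb_r_first by simp
    also have "tval t 0 = sg r t (Suc (Suc k)) * pth t h * sg s t q2"
      using tv_h[of 0] e1 by simp
    also have "tval t (h+2) = sg r t k * pth t h * sg s t q2"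
      using tv_r[of "h+2"] e1 by simp
    finally show ?thesis using ti lin3[OF sg_rec[OF t, of r k]] by (simp add: add.commute)
  next
    case rin
    obtain k where k: "V1 - (i+1) = k" by simp
    have e1: "V1 - i = Suc k" "V1 - (i - 1) = Suc (Suc k)" using rin k by auto
    have ti: "tval t i = sg r t (Suc k) * pth t h * sg s t q2"
      using tv_r[of i] rin e1 by simp
    have "sum (tval t) {j. j < NN \<and> adjp i j} = tval t (i-1) + tval t (i+1)"
      unfolding nb_r_inner[OF rin] using rin by simp
    also have "tval t (i-1) = sg r t (Suc (Suc k)) * pth t h * sg s t q2"
      using tv_r[of "i-1"] rin e1 by simp
    also have "tval t (i+1) = sg r t k * pth t h * sg s t q2"
      using tv_r[of "i+1"] rin k by simp
    finally show ?thesis using ti lin3[OF sg_rec[OF t, of r k]] by (simp add: add.commute)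
  next
    case v1
    have inj: "inj_on (\<lambda>k. BB+2*k) {..<r}" by (rule inj_onI) simp
    have nin: "V1 - 1 \<notin> (\<lambda>k. BB+2*k) ` {..<r}" by auto
    have ti: "tval t i = sg r t 0 * pth t h * sg s t q2"
      using tv_r[of i] v1 q1 by simp
    have "sum (tval t) {j. j < NN \<and> adjp i j} = tval t (V1-1) + sum (tval t) ((\<lambda>k. BB+2*k) ` {..<r})"
      unfolding v1 nb_v1 using nin by simp
    also have "sum (tval t) ((\<lambda>k. BB+2*k) ` {..<r}) = (\<Sum>k<r. tval t (BB+2*k))"
      using sum.reindex[OF inj] by simp
    also have "\<dots> = (\<Sum>k<r. md t * pth t h * sg s t q2)"
      by (rule sum.cong[OF refl], rule tv_rm) simp
    also have "\<dots> = real r * md t * pth t h * sg s t q2" by simp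
    also have "tval t (V1-1) = sg r t 1 * pth t h * sg s t q2"
      using tv_r[of "V1-1"] q1 h1 by simp
    finally show ?thesis using ti lin3[OF sg_v[OF t, of r]] by (simp add: mult.assoc)
  next
    case sf
    obtain k where k: "q2 - 2 = k" by simp
    have e1: "q2 = Suc (Suc k)" using q2 k by auto
    have ti: "tval t i = sg s t (Suc k) * pth t h * sg r t q1"
      using tv_s[of i] sf e1 by simp
    have "sum (tval t) {j. j < NN \<and> adjp i j} = tval t 0 + tval t (V1+2)"
      unfolding sf nb_s_first by simp
    also have "tval t 0 = sg s t (Suc (Suc k)) * pth t h * sg r t q1"
      using tv_h[of 0] e1 by simp
    also have "tval t (V1+2) = sg s t k * pth t h * sg r t q1"
      using tv_s[of "V1+2"] e1 by simp
    finally show ?thesis using ti lin3[OF sg_rec[OF t, of s k]] by (simp add: add.commute)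
  next
    case sin
    obtain k where k: "V2 - (i+1) = k" by simp
    have e1: "V2 - i = Suc k" "V2 - (i - 1) = Suc (Suc k)" using sin k by auto
    have ti: "tval t i = sg s t (Suc k) * pth t h * sg r t q1"
      using tv_s[of i] sin e1 by simp
    have "sum (tval t) {j. j < NN \<and> adjp i j} = tval t (i-1) + tval t (i+1)"
      unfolding nb_s_inner[OF sin] using sin by simp
    also have "tval t (i-1) = sg s t (Suc (Suc k)) * pth t h * sg r t q1"
      using tv_s[of "i-1"] sin e1 by simp
    also have "tval t (i+1) = sg s t k * pth t h * sg r t q1"
      using tv_s[of "i+1"] sin k by simp
    finally show ?thesis using ti lin3[OF sg_rec[OF t, of s k]] by (simp add: add.commute)
  next
    case v2
    have inj: "inj_on (\<lambda>k. CC+2*k) {..<s}" by (rule inj_onI) simp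
    have nin: "V2 - 1 \<notin> (\<lambda>k. CC+2*k) ` {..<s}" by auto
    have ti: "tval t i = sg s t 0 * pth t h * sg r t q1"
      using tv_s[of i] v2 q2 by simp
    have "sum (tval t) {j. j < NN \<and> adjp i j} = tval t (V2-1) + sum (tval t) ((\<lambda>k. CC+2*k) ` {..<s})"
      unfolding v2 nb_v2 using nin by simp
    also have "sum (tval t) ((\<lambda>k. CC+2*k) ` {..<s}) = (\<Sum>k<s. tval t (CC+2*k))"
      using sum.reindex[OF inj] by simp
    also have "\<dots> = (\<Sum>k<s. md t * pth t h * sg r t q1)"
      by (rule sum.cong[OF refl], rule tv_sm) simp
    also have "\<dots> = real s * md t * pth t h * sg r t q1" by simp
    also have "tval t (V2-1) = sg s t 1 * pth t h * sg r t q1"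
      using tv_s[of "V2-1"] q2 h1 by simp
    finally show ?thesis using ti lin3[OF sg_v[OF t, of s]] by (simp add: mult.assoc)
  next
    case (rm k)
    have d: "V1 \<noteq> BB+2*k+1" by simp
    have ti: "tval t i = md t * pth t h * sg s t q2" using tv_rm[OF rm(1)] rm(2) by simp
    have "sum (tval t) {j. j < NN \<and> adjp i j} = tval t V1 + tval t (BB+2*k+1)"
      unfolding rm(2) nb_rmid[OF rm(1)] using d by simp
    also have "tval t V1 = sg r t 0 * pth t h * sg s t q2"
      using tv_r[of V1] q1 by simp
    also have "tval t (BB+2*k+1) = lf t * pth t h * sg s t q2" using tv_rl[OF rm(1)] .
    finally show ?thesis using ti lin3[OF md_eq[OF t, of r]] by simp
  next
    case (rl k)
    have ti: "tval t i = lf t * pth t h * sg s t q2" using tv_rl[OF rl(1)] rl(2) by simp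
    have "sum (tval t) {j. j < NN \<and> adjp i j} = tval t (BB+2*k)"
      unfolding rl(2) nb_rleaf[OF rl(1)] by simp
    also have "\<dots> = md t * pth t h * sg s t q2" using tv_rm[OF rl(1)] .
    finally show ?thesis using ti lf_eq[OF t] by simp
  next
    case (sm k)
    have d: "V2 \<noteq> CC+2*k+1" by simp
    have ti: "tval t i = md t * pth t h * sg r t q1" using tv_sm[OF sm(1)] sm(2) by simp
    have "sum (tval t) {j. j < NN \<and> adjp i j} = tval t V2 + tval t (CC+2*k+1)"
      unfolding sm(2) nb_smid[OF sm(1)] using d by simp
    also have "tval t V2 = sg s t 0 * pth t h * sg r t q1"
      using tv_s[of V2] q2 by simp
    also have "tval t (CC+2*k+1) = lf t * pth t h * sg r t q1" using tv_sl[OF sm(1)] .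
    finally show ?thesis using ti lin3[OF md_eq[OF t, of s]] by simp
  next
    case (sl k)
    have ti: "tval t i = lf t * pth t h * sg r t q1" using tv_sl[OF sl(1)] sl(2) by simp
    have "sum (tval t) {j. j < NN \<and> adjp i j} = tval t (CC+2*k)"
      unfolding sl(2) nb_sleaf[OF sl(1)] by simp
    also have "\<dots> = md t * pth t h * sg r t q1" using tv_sm[OF sl(1)] .
    finally show ?thesis using ti lf_eq[OF t] by simp
  qed
qed

end

lemma cubic_pos:
  fixes X :: real assumes X: "X \<ge> 27/10"
  shows "X^3 - X^2 - 3*X - 2 > 0"
proof -
  define y where "y = X - 27/10"
  have y: "y \<ge> 0" using X by (simp add: y_def)
  have XY: "X = y + 27/10" by (simp add: y_def)
  have "X^3 - X^2 - 3*X - 2 = y^3 + 71/10*y^2 + 1347/100*y + 2293/1000"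
    unfolding XY by (simp add: power3_eq_cube power2_eq_square field_simps)
  also have "\<dots> > 0"
  proof -
    have "y^3 \<ge> 0" "y^2 \<ge> 0" using y by simp_all
    thus ?thesis using y by linarith
  qed
  finally show ?thesis .
qed

lemma X_big:
  fixes X :: real assumes "X > 1" "X^2 \<ge> 2*(X+1)" shows "X \<ge> 27/10"
proof (rule ccontr)
  assume "\<not> X \<ge> 27/10"
  hence a: "X - 1 < 17/10" "X - 1 > 0" using assms by auto
  have "(X-1)^2 < (17/10)^2" using a by (intro power_strict_mono) auto
  moreover have "(17/10::real)^2 = 289/100" by (simp add: power2_eq_square)
  ultimately have "(X-1)^2 < 3" by simp
  moreover have "(X-1)^2 = X^2 - 2*X + 1" by (simp add: power2_eq_square algebra_simps)
  ultimately show False using assms by (smt (verit))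
qed

lemma P6_pos:
  fixes X :: real assumes X: "X \<ge> 27/10"
  shows "X + X^2 - 2*X^3 - 3*X^4 - X^5 + X^6 > 0"
proof -
  have c: "X^3 - X^2 - 3*X - 2 > 0" using cubic_pos[OF X] .
  have Xp: "X > 0" using X by simp
  have "X^2 * (X^3 - X^2 - 3*X - 2) > 0" using c Xp by simp
  hence "X^2 * (X^3 - X^2 - 3*X - 2) + X + 1 > 0" using Xp by linarith
  hence "X * (X^2 * (X^3 - X^2 - 3*X - 2) + X + 1) > 0" using Xp by simp
  moreover have "X * (X^2 * (X^3 - X^2 - 3*X - 2) + X + 1) = X + X^2 - 2*X^3 - 3*X^4 - X^5 + X^6"
    by (simp add: algebra_simps power_numeral_reduce)
  ultimately show ?thesis by simp
qed

lemma key_ineq: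
  fixes X pr qr ps qs :: real and r m k :: nat
  assumes X1: "X > 1" and r2: "r \<ge> 2" and Xr: "X^2 \<ge> real r * (X+1)"
    and pr: "pr = X^2 - (real r - 1)*(X+1)" and qr: "qr = (real r - 1)*(X+1) - 1/X"
    and ps: "ps \<ge> 0" and qs: "qs > 0" and m: "m \<ge> 3"
    and F2: "-1/(X^m - 1) + qr/(pr * X^2 + qr) + qs/(ps * X^(k+1) + qs) - (X-2)/(X-1) = 0"
  shows "-1/(X^3 - 1) + qr/(pr * X^m + qr) + qs/(ps * X^k + qs) - (X-2)/(X-1) > 0"
proof -
  have Xp: "X > 0" using X1 by simp
  have rr: "real r \<ge> 2" using r2 by simp
  have "X^2 \<ge> 2*(X+1)"
  proof -
    have "2*(X+1) \<le> real r * (X+1)" using rr X1 by (intro mult_right_mono) auto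
    thus ?thesis using Xr by linarith
  qed
  hence X27: "X \<ge> 27/10" using X_big X1 by blast
  have prb: "pr \<ge> X + 1"
  proof -
    have "pr - (X+1) = X^2 - real r * (X+1)" unfolding pr by (simp add: algebra_simps)
    thus ?thesis using Xr by linarith
  qed
  have r1X: "(real r - 1)*(X+1) \<ge> X + 1" using rr X1 by (simp add: mult_right_mono)
  have invX: "1/X < 1" "1/X > 0" using X1 by auto
  have qrp: "qr > 0" unfolding qr using r1X invX X1 by linarith
  have qrb: "qr \<le> X^2 - X - 1"
  proof -
    have "(real r - 1)*(X+1) = real r * (X+1) - (X+1)" by (simp add: algebra_simps)
    thus ?thesis unfolding qr using Xr invX by linarith
  qed
  define B where "B = (X^2 - X - 1) / ((X+1)*X^2 + (X^2 - X - 1))"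
  have X2p: "X^2 > 0" using Xp by simp
  have Bn: "X^2 - X - 1 > 0" using qrp qrb by linarith
  have frB: "qr/(pr * X^2 + qr) \<le> B"
  proof -
    have d1: "pr * X^2 + qr > 0" using prb X1 qrp X2p by (simp add: add_pos_pos)
    have d2: "(X+1)*X^2 + (X^2 - X - 1) > 0" using Bn X1 X2p by (simp add: add_pos_pos)
    have "qr * ((X+1)*X^2) \<le> (X^2 - X - 1) * (pr * X^2)"
    proof -
      have "qr * ((X+1)*X^2) \<le> (X^2 - X - 1) * ((X+1)*X^2)"
        using qrb X1 X2p by (intro mult_right_mono) auto
      also have "\<dots> \<le> (X^2 - X - 1) * (pr * X^2)"
        using prb Bn X2p by (intro mult_left_mono mult_right_mono) auto
      finally show ?thesis .
    qed
    hence "qr * ((X+1)*X^2 + (X^2 - X - 1)) \<le> (X^2 - X - 1) * (pr * X^2 + qr)"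
      by (simp add: algebra_simps)
    thus ?thesis unfolding B_def using d1 d2 by (simp add: divide_simps mult.commute)
  qed
  define N where "N = X^3 - X^2 - X - 1"
  have Np: "N > 0" using cubic_pos[OF X27] X1 unfolding N_def by linarith
  define M2 where "M2 = (X-1)*(2*X^2+2*X+1)"
  have M2p: "M2 > 0" unfolding M2_def using X1 Xp by (simp add: add_pos_pos)
  define C where "C = X^3 + 2*X^2 - X - 1"
  have Cp: "C > 0" unfolding C_def using Np unfolding N_def using X1 Xp
  proof -
    have "X^3 + 2*X^2 - X - 1 = N + 3*X^2" unfolding N_def by simp
    thus "X^3 + 2*X^2 - X - 1 > 0" using Np X2p by linarith
  qed
  have BC: "B = (X^2 - X - 1) / C" unfolding B_def C_def by (simp add: algebra_simps power2_eq_square power3_eq_cube)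
  define Q where "Q = 2*X^2+2*X+1"
  have Qp: "Q > 0" unfolding Q_def using Xp by (simp add: add_pos_pos)
  have M2Q: "M2 = (X-1)*Q" unfolding M2_def Q_def ..
  have poly: "(X-2)/(X-1) - B - N/M2 > 0"
  proof -
    have X1n: "X - 1 \<noteq> 0" using X1 by simp
    define u1 where "u1 = (X-2)/(X-1)"
    define v where "v = N/M2"
    have f1: "u1 * (X-1) = X - 2" unfolding u1_def using X1n by simp
    have f2: "B * C = X^2 - X - 1" unfolding BC using Cp by simp
    have f3: "v * ((X-1)*Q) = N" unfolding v_def M2Q[symmetric] using M2p by simp
    have "(u1 - B - v) * ((X-1)*Q*C)
        = (u1 * (X-1))*(Q*C) - (B*C)*((X-1)*Q) - (v*((X-1)*Q))*C"
      by (simp add: algebra_simps)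
    also have "\<dots> = (X-2)*(Q*C) - (X^2 - X - 1)*((X-1)*Q) - N*C" unfolding f1 f2 f3 ..
    also have "\<dots> = X + X^2 - 2*X^3 - 3*X^4 - X^5 + X^6"
      unfolding Q_def C_def N_def by (simp add: algebra_simps power_numeral_reduce)
    finally have e: "(u1 - B - v) * ((X-1)*Q*C) = X + X^2 - 2*X^3 - 3*X^4 - X^5 + X^6" .
    have "(u1 - B - v) * ((X-1)*Q*C) > 0" unfolding e using P6_pos[OF X27] .
    moreover have "(X-1)*Q*C > 0" using X1 Qp Cp by simp
    ultimately have "u1 - B - v > 0" by (simp add: zero_less_mult_iff)
    thus ?thesis unfolding u1_def v_def .
  qed
  define a where "a = ps * X^k"
  have a0: "a \<ge> 0" unfolding a_def using ps Xp by simp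
  have aX: "ps * X^(k+1) = a * X" unfolding a_def by simp
  have Xm: "X^m - 1 > 0" using X1 m by (simp add: one_less_power)
  have w: "qs/(a*X + qs) > N/M2"
  proof -
    have "qs/(a*X + qs) = (X-2)/(X-1) + 1/(X^m - 1) - qr/(pr * X^2 + qr)"
    proof -
      have "-1/(X^m-1) = -(1/(X^m-1))" by simp
      with F2[unfolded aX] show ?thesis by linarith
    qed
    moreover have "1/(X^m - 1) > 0" using Xm by simp
    ultimately show ?thesis using frB poly by linarith
  qed
  have den1: "a*X + qs > 0" using a0 Xp qs by (simp add: add_nonneg_pos)
  have "qs * M2 > N * (a*X + qs)" using w den1 M2p by (simp add: divide_simps mult.commute)
  moreover have "M2 = N + X * (X^2 + X)" unfolding M2_def N_def by (simp add: algebra_simps power2_eq_square power3_eq_cube)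
  ultimately have "qs * (X * (X^2 + X)) > N * a * X" by (simp add: algebra_simps)
  hence s1: "qs * (X^2 + X) > N * a" using Xp by (simp add: mult.commute mult.left_commute)
  have X3: "X^3 - 1 = N + (X^2 + X)" unfolding N_def by simp
  have X3p: "X^3 - 1 > 0" using X1 by (simp add: one_less_power)
  have "qs * (X^3 - 1) > N * (a + qs)" unfolding X3 using s1 by (simp add: algebra_simps)
  hence s2: "qs/(a + qs) > N/(X^3 - 1)" using X3p a0 qs by (simp add: divide_simps mult.commute)
  have Neq: "N/(X^3 - 1) = (X-2)/(X-1) + 1/(X^3-1)"
  proof -
    have h3: "X^3 - 1 = (X-1)*(X^2+X+1)" by (simp add: algebra_simps power3_eq_cube power2_eq_square)
    have qp: "X^2+X+1 > 0" using Xp by (simp add: add_pos_pos)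
    have "(X-2)/(X-1) = ((X-2)*(X^2+X+1))/(X^3-1)" unfolding h3 using qp by simp
    hence "(X-2)/(X-1) + 1/(X^3-1) = ((X-2)*(X^2+X+1) + 1)/(X^3-1)" by (simp add: add_divide_distrib)
    also have "(X-2)*(X^2+X+1) + 1 = N" unfolding N_def by (simp add: algebra_simps power3_eq_cube power2_eq_square)
    finally show ?thesis by simp
  qed
  have frm: "qr/(pr * X^m + qr) > 0"
  proof -
    have "pr * X^m \<ge> 0" using prb X1 by simp
    thus ?thesis using qrp by simp
  qed
  have "-1/(X^3-1) = -(1/(X^3-1))" by simp
  thus ?thesis using s2 Neq frm unfolding a_def by linarith
qed

definition Phi :: "nat \<Rightarrow> nat \<Rightarrow> nat \<Rightarrow> nat \<Rightarrow> nat \<Rightarrow> real \<Rightarrow> real" where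
 "Phi r s h q1 q2 t = pth t (h-1) * sg r t q1 * sg s t q2 + sg r t (q1-1) * pth t h * sg s t q2
     + sg s t (q2-1) * pth t h * sg r t q1 - lam t * (pth t h * sg r t q1 * sg s t q2)"

definition Fn :: "nat \<Rightarrow> nat \<Rightarrow> nat \<Rightarrow> nat \<Rightarrow> nat \<Rightarrow> real \<Rightarrow> real" where
 "Fn r s h q1 q2 t = -1/((t^2)^(h+1) - 1) + qc r t/(pc r t * (t^2)^q1 + qc r t)
     + qc s t/(pc s t * (t^2)^q2 + qc s t) - (t^2-2)/(t^2-1)"

lemma abstract_id:
  fixes t P Sa Sb P' Sa' Sb' a b c A Ba Bb qa qb :: real
  assumes t: "t \<noteq> 0" and a: "a \<noteq> 0" and b: "b \<noteq> 0" and c: "c \<noteq> 0"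
    and P: "P \<noteq> 0" and Sa: "Sa \<noteq> 0" and Sb: "Sb \<noteq> 0" and X1: "t^2 \<noteq> 1"
    and P': "P' = P/t - (t - 1/t)/a" and Sa': "Sa' = Sa/t + qa*(t - 1/t)/b"
    and Sb': "Sb' = Sb/t + qb*(t - 1/t)/c"
    and A: "A - 1 = a*P" and Ba: "Ba = b*Sa" and Bb: "Bb = c*Sb"
  shows "P'*Sa*Sb + Sa'*P*Sb + Sb'*P*Sa - (t + 1/t)*(P*Sa*Sb)
       = (t - 1/t)*P*Sa*Sb*(-1/(A-1) + qa/Ba + qb/Bb - (t^2-2)/(t^2-1))"
proof -
  have X1': "t^2 - 1 \<noteq> 0" using X1 by simp
  have e: "(t - 1/t) * ((t^2-2)/(t^2-1)) = t - 2/t"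
    using t X1' by (simp add: field_simps power2_eq_square)
  show ?thesis unfolding A Ba Bb P' Sa' Sb'
    using t a b c P Sa Sb X1' e
    by (simp add: field_simps)
qed

lemma pth_pred: assumes "t \<noteq> 0" shows "pth t h' = pth t (Suc h') / t - (t - 1/t)/t^(Suc h' + 1)"
  using assms by (simp add: pth_def field_simps)

lemma pth_X: assumes "t \<noteq> 0" shows "t^(h+1) * pth t h = (t^2)^(h+1) - 1"
proof -
  have "(t^2)^(h+1) = t^(h+1) * t^(h+1)" by (simp add: power_mult[symmetric] power_add[symmetric] mult_2)
  thus ?thesis using assms by (simp add: pth_def right_diff_distrib)
qed

lemma sg_pred: assumes "t \<noteq> 0" shows "sg r t L = sg r t (Suc L) / t + qc r t * (t - 1/t) / t^(Suc L)"
  using assms by (simp add: sg_def field_simps)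

lemma sg_X: assumes "t \<noteq> 0" shows "t^L * sg r t L = pc r t * (t^2)^L + qc r t"
proof -
  have "(t^2)^L = t^L * t^L" by (simp add: power_mult[symmetric] power_add[symmetric] mult_2)
  thus ?thesis using assms by (simp add: sg_def distrib_left)
qed

lemma pth_pos: assumes "t > 1" shows "pth t k > 0"
proof -
  define T where "T = t^(k+1)"
  have T1: "T > 1" unfolding T_def by (rule one_less_power[OF assms]) simp
  hence "1/T < 1" by simp
  hence "T - 1/T > 0" using T1 by linarith
  thus ?thesis unfolding pth_def T_def .
qed

lemma qc_pos: assumes "t > 1" "r \<ge> 2" shows "qc r t > 0"
proof -
  have "real r - 1 \<ge> 1" using assms by simp
  moreover have "t^2 + 1 \<ge> 1" by simp
  ultimately have "(real r - 1)*(t^2+1) \<ge> 1*1" by (intro mult_mono) auto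
  moreover have "1/t^2 < 1" using assms by simp
  ultimately show ?thesis by (simp add: qc_def)
qed

lemma sg_pos: assumes "t > 0" "pc r t \<ge> 0" "qc r t > 0" shows "sg r t k > 0"
  using assms by (simp add: sg_def add_nonneg_pos)

lemma md_pos: "t > 1 \<Longrightarrow> md t > 0"
proof -
  assume t: "t > 1"
  have "t^3 > 1" by (rule one_less_power[OF t]) simp
  moreover have "1/t < 1" using t by simp
  ultimately show ?thesis by (simp add: md_def)
qed

lemma lf_pos: "t > 1 \<Longrightarrow> lf t > 0"
  by (simp add: lf_def one_less_power)

lemma Phi_Fn:
  assumes t: "t > 1" and h: "h \<ge> 1" and q1: "q1 \<ge> 1" and q2: "q2 \<ge> 1"
    and r: "r \<ge> 2" and s: "s \<ge> 2" and pr: "pc r t \<ge> 0" and ps: "pc s t \<ge> 0"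
  shows "Phi r s h q1 q2 t = (t - 1/t) * pth t h * sg r t q1 * sg s t q2 * Fn r s h q1 q2 t"
proof -
  have t0: "t \<noteq> 0" using t by simp
  obtain h' where h': "h = Suc h'" using h by (cases h) auto
  obtain a1 where a1: "q1 = Suc a1" using q1 by (cases q1) auto
  obtain a2 where a2: "q2 = Suc a2" using q2 by (cases q2) auto
  have "t^2 > 1" by (rule one_less_power[OF t]) simp
  hence X1: "t^2 \<noteq> 1" by simp
  have id: "pth t (h-1) * sg r t q1 * sg s t q2 + sg r t (q1-1) * pth t h * sg s t q2
     + sg s t (q2-1) * pth t h * sg r t q1 - (t + 1/t) * (pth t h * sg r t q1 * sg s t q2)
     = (t - 1/t) * pth t h * sg r t q1 * sg s t q2 * (-1/(((t^2)^(h+1)) - 1)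
        + qc r t/(pc r t * (t^2)^q1 + qc r t) + qc s t/(pc s t * (t^2)^q2 + qc s t) - (t^2-2)/(t^2-1))"
  proof (rule abstract_id[where t = t and a = "t^(h+1)" and b = "t^q1" and c = "t^q2"
      and P = "pth t h" and Sa = "sg r t q1" and Sb = "sg s t q2" and P' = "pth t (h-1)"
      and Sa' = "sg r t (q1-1)" and Sb' = "sg s t (q2-1)" and A = "(t^2)^(h+1)"
      and Ba = "pc r t * (t^2)^q1 + qc r t" and Bb = "pc s t * (t^2)^q2 + qc s t"
      and qa = "qc r t" and qb = "qc s t"])
    show "t \<noteq> 0" "t^(h+1) \<noteq> 0" "t^q1 \<noteq> 0" "t^q2 \<noteq> 0" "t^2 \<noteq> 1" using t0 X1 by auto
    have t0': "t > 0" using t by simp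
    have "pth t h > 0" using pth_pos[OF t] .
    thus "pth t h \<noteq> 0" by simp
    have "sg r t q1 > 0" using sg_pos[OF t0' pr qc_pos[OF t r]] .
    thus "sg r t q1 \<noteq> 0" by simp
    have "sg s t q2 > 0" using sg_pos[OF t0' ps qc_pos[OF t s]] .
    thus "sg s t q2 \<noteq> 0" by simp
    show "pth t (h-1) = pth t h / t - (t - 1/t) / t^(h+1)"
      using pth_pred[OF t0, of h'] h' by simp
    show "sg r t (q1-1) = sg r t q1 / t + qc r t * (t - 1/t) / t^q1"
      using sg_pred[OF t0, of r a1] a1 by simp
    show "sg s t (q2-1) = sg s t q2 / t + qc s t * (t - 1/t) / t^q2"
      using sg_pred[OF t0, of s a2] a2 by simp
    show "(t^2)^(h+1) - 1 = t^(h+1) * pth t h" using pth_X[OF t0, of h] by simp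
    show "pc r t * (t^2)^q1 + qc r t = t^q1 * sg r t q1" using sg_X[OF t0] by simp
    show "pc s t * (t^2)^q2 + qc s t = t^q2 * sg s t q2" using sg_X[OF t0] by simp
  qed
  show ?thesis unfolding Phi_def Fn_def lam_def using id by simp
qed

context tctx begin

lemma tvec_eig:
  assumes t: "t > 1" and P0: "Phi r s h q1 q2 t = 0"
  shows "adj_mat NN (tree_edges r s h q1 q2) *\<^sub>v tvec t = lam t \<cdot>\<^sub>v tvec t"
proof (rule eq_vecI)
  have t0: "t \<noteq> 0" using t by simp
  have ueq: "tval t 1 + tval t (h+1) + tval t (V1+1) = lam t * tval t 0"
  proof -
    have "tval t 1 = pth t (h-1) * sg r t q1 * sg s t q2" using tv_h[of 1] h1 by simp
    moreover have "tval t (h+1) = sg r t (q1-1) * pth t h * sg s t q2"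
      using tv_r[of "h+1"] q1 by simp
    moreover have "tval t (V1+1) = sg s t (q2-1) * pth t h * sg r t q1"
      using tv_s[of "V1+1"] q2 by simp
    moreover have "tval t 0 = pth t h * sg r t q1 * sg s t q2" using tv_h[of 0] by simp
    ultimately show ?thesis using P0 unfolding Phi_def by simp
  qed
  fix i assume "i < dim_vec (lam t \<cdot>\<^sub>v tvec t)"
  hence i: "i < NN" by (simp add: tvec_def)
  show "(adj_mat NN (tree_edges r s h q1 q2) *\<^sub>v tvec t) $ i = (lam t \<cdot>\<^sub>v tvec t) $ i"
    using row_sum[OF i] eig_eq[OF t0 ueq i] i by (simp add: tvec_def)
next
  show "dim_vec (adj_mat NN (tree_edges r s h q1 q2) *\<^sub>v tvec t) = dim_vec (lam t \<cdot>\<^sub>v tvec t)"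
    by (simp add: tvec_def adj_mat_def)
qed

lemma tval_pos:
  assumes t: "t > 1" and r: "r \<ge> 2" and s: "s \<ge> 2" and pr: "pc r t \<ge> 0" and ps: "pc s t \<ge> 0"
  shows "tval t i > 0"
proof -
  have a: "pth t k > 0" for k using pth_pos[OF t] .
  have b: "sg r t k > 0" for k using sg_pos[of t r k] t pr qc_pos[OF t r] by simp
  have c: "sg s t k > 0" for k using sg_pos[of t s k] t ps qc_pos[OF t s] by simp
  have d: "md t > 0" "lf t > 0" using md_pos[OF t] lf_pos[OF t] by auto
  show ?thesis unfolding tval_def using a b c d by simp
qed

lemma tvec_eigenvalue:
  assumes t: "t > 1" and P0: "Phi r s h q1 q2 t = 0" and r: "r \<ge> 2" and s: "s \<ge> 2"
    and pr: "pc r t \<ge> 0" and ps: "pc s t \<ge> 0"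
  shows "eigenvalue (adj_mat NN (tree_edges r s h q1 q2)) (lam t)"
  unfolding eigenvalue_def eigenvector_def
proof (intro exI conjI)
  show "tvec t \<in> carrier_vec (dim_row (adj_mat NN (tree_edges r s h q1 q2)))"
    by (simp add: tvec_def adj_mat_def)
  show "tvec t \<noteq> 0\<^sub>v (dim_row (adj_mat NN (tree_edges r s h q1 q2)))"
  proof
    assume "tvec t = 0\<^sub>v (dim_row (adj_mat NN (tree_edges r s h q1 q2)))"
    hence "tvec t $ 0 = 0" by (simp add: adj_mat_def)
    moreover have "tvec t $ 0 = tval t 0" by (simp add: tvec_def)
    ultimately show False using tval_pos[OF t r s pr ps, of 0] by simp
  qed
  show "adj_mat NN (tree_edges r s h q1 q2) *\<^sub>v tvec t = lam t \<cdot>\<^sub>v tvec t" by (rule tvec_eig[OF t P0])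
qed

end

lemma Phi_cont: assumes "a > 0" shows "continuous_on {a..b} (Phi r s h q1 q2)"
proof -
  have nz: "\<forall>x\<in>{a..b}. x \<noteq> 0" using assms by auto
  show ?thesis unfolding Phi_def pth_def sg_def pc_def qc_def lam_def
    using nz by (intro continuous_intros) auto
qed

lemma pc_cont: "continuous_on A (pc r)"
  unfolding pc_def by (intro continuous_intros)

lemma pc_X: "pc r t = (t^2)^2 - (real r - 1)*(t^2+1)"
  by (simp add: pc_def power_mult[symmetric])

lemma pc_mono_r: "real r \<le> real s \<Longrightarrow> pc s t \<le> pc r t"
proof -
  assume "real r \<le> real s"
  hence "(real r - 1)*(t^2+1) \<le> (real s - 1)*(t^2+1)" by (intro mult_right_mono) auto
  thus ?thesis by (simp add: pc_def)
qed

lemma pc_mono_t: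
  assumes ta: "ta \<ge> 1" and z: "pc s ta = 0" and tt: "ta \<le> t" and s: "s \<ge> 1"
  shows "pc s t \<ge> 0"
proof -
  define X where "X = t^2"
  define Xa where "Xa = ta^2"
  define c where "c = real s - 1"
  have c0: "c \<ge> 0" using s by (simp add: c_def)
  have Xa1: "Xa \<ge> 1" unfolding Xa_def using ta by (simp add: one_le_power)
  have XXa: "X \<ge> Xa" unfolding X_def Xa_def using ta tt by (intro power_mono) auto
  have za: "Xa^2 = c*(Xa+1)" using z unfolding pc_X Xa_def c_def by simp
  have Xac: "Xa \<ge> c"
  proof (rule ccontr)
    assume "\<not> Xa \<ge> c"
    hence "Xa < c" by simp
    hence "Xa * Xa < c * Xa" using Xa1 by (intro mult_strict_right_mono) auto
    moreover have "c * Xa \<le> c*(Xa+1)" using c0 by (simp add: mult_left_mono)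
    ultimately show False using za by (simp add: power2_eq_square)
  qed
  have "X^2 - c*(X+1) = (X - Xa)*(X + Xa - c) + (Xa^2 - c*(Xa+1))"
    by (simp add: algebra_simps power2_eq_square)
  also have "\<dots> = (X - Xa)*(X + Xa - c)" using za by simp
  also have "\<dots> \<ge> 0" using XXa Xac Xa1 by (intro mult_nonneg_nonneg) auto
  finally show ?thesis unfolding pc_X X_def c_def by simp
qed

lemma branch_small:
  fixes S :: real and r' L :: nat
  assumes S: "S \<ge> 3" and R2: "real r' \<ge> 2" and RS: "real r' \<le> S" and L: "L \<ge> 1"
  shows "qc r' S / (pc r' S * (S^2)^L + qc r' S) < 1/4"
proof -
  define X where "X = S^2"
  define R where "R = real r'"
  have X9: "X \<ge> 9" unfolding X_def using S power_mono[of 3 S 2] by simp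
  have Sp: "S > 0" using S by simp
  have qc: "qc r' S = (R-1)*(X+1) - 1/X" unfolding qc_def X_def R_def by simp
  have pc: "pc r' S = X^2 - (R-1)*(X+1)" unfolding pc_X X_def R_def by simp
  have qpos: "qc r' S > 0" using qc_pos[of S r'] S R2 by simp
  have q1: "qc r' S \<le> S*(X+1)"
  proof -
    have "(R-1)*(X+1) \<le> S*(X+1)" using RS X9 unfolding R_def by (intro mult_right_mono) auto
    moreover have "1/X \<ge> 0" using X9 by simp
    ultimately show ?thesis unfolding qc by linarith
  qed
  have p1: "pc r' S \<ge> 2*S^3"
  proof -
    have "(R-1)*(X+1) \<le> (S-1)*(X+1)" using RS X9 unfolding R_def by (intro mult_right_mono) auto
    moreover have "X^2 - (S-1)*(X+1) - 2*S^3 = S^3*(S-3) + (S^2 - S + 1)"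
      unfolding X_def by (simp add: algebra_simps power2_eq_square power3_eq_cube power_numeral_reduce)
    moreover have "S^3*(S-3) \<ge> 0" using S by simp
    moreover have "S^2 - S + 1 > 0"
    proof -
      have "S^2 \<ge> S" using S by (simp add: power2_eq_square)
      thus ?thesis by linarith
    qed
    ultimately show ?thesis unfolding pc by linarith
  qed
  have "X^1 \<le> X^L" using L X9 by (intro power_increasing) auto
  hence XL: "X^L \<ge> X" by simp
  have "pc r' S * X^L \<ge> 2*S^3 * X"
    using p1 XL X9 Sp by (intro mult_mono) (auto intro: order.trans[OF _ p1])
  also have "2*S^3 * X = 2*S^5" unfolding X_def by (simp add: power_add[symmetric])
  finally have pb: "pc r' S * X^L \<ge> 2*S^5" .
  have "3 * qc r' S < pc r' S * X^L"
  proof -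
    have "3 * qc r' S \<le> 3*S*(X+1)" using q1 by simp
    also have "3*S*(X+1) = 3*S^3 + 3*S" unfolding X_def by (simp add: algebra_simps power2_eq_square power3_eq_cube)
    also have "3*S^3 + 3*S < 2*S^5"
    proof -
      have "S^5 = S^2 * S^3" by (simp add: power_add[symmetric])
      moreover have "S^2 \<ge> 9" using X9 unfolding X_def .
      moreover have "S^3 \<ge> 27" using S power_mono[of 3 S 3] by simp
      ultimately have "S^5 \<ge> 9 * S^3" by (metis mult_right_mono zero_le_power Sp less_imp_le)
      moreover have "S^3 \<ge> S"
      proof -
        have "S * S^2 \<ge> S * 1" using \<open>S^2 \<ge> 9\<close> Sp by (intro mult_left_mono) auto
        thus ?thesis by (simp add: power3_eq_cube power2_eq_square mult.assoc)
      qed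
      ultimately show ?thesis using Sp by linarith
    qed
    finally show ?thesis using pb by linarith
  qed
  hence "4 * qc r' S < pc r' S * X^L + qc r' S" by linarith
  moreover have "pc r' S * X^L + qc r' S > 0"
  proof -
    have "S^5 > 0" using Sp by simp
    thus ?thesis using pb qpos by linarith
  qed
  ultimately show ?thesis unfolding X_def by (simp add: divide_simps)
qed

lemma Fn_big:
  assumes S: "real s \<ge> 3" and r: "r \<ge> 2" and rs: "r \<le> s" and q1: "q1 \<ge> 1" and q2: "q2 \<ge> 1"
  shows "Fn r s h q1 q2 (real s) < 0"
proof -
  define X where "X = (real s)^2"
  have X9: "X \<ge> 9" unfolding X_def using S power_mono[of 3 "real s" 2] by simp
  have a: "qc r (real s)/(pc r (real s) * X^q1 + qc r (real s)) < 1/4"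
    unfolding X_def by (rule branch_small) (use S r rs q1 in auto)
  have b: "qc s (real s)/(pc s (real s) * X^q2 + qc s (real s)) < 1/4"
    unfolding X_def by (rule branch_small) (use S r rs q2 in auto)
  have c: "(X-2)/(X-1) \<ge> 7/8" using X9 by (simp add: divide_simps)
  have "X^(h+1) > 1" using X9 by (intro one_less_power) auto
  hence d: "-1/(X^(h+1) - 1) < 0" by simp
  show ?thesis unfolding Fn_def X_def[symmetric] using a b c d by linarith
qed

lemma Fn_thr:
  assumes t: "t > 1" and z: "pc s t = 0" and pr: "pc r t \<ge> 0" and r: "r \<ge> 2" and s: "s \<ge> 2" and h: "h \<ge> 1"
  shows "Fn r s h q1 q2 t > 0"
proof -
  define X where "X = t^2"
  have X1: "X > 1" unfolding X_def using t by (intro one_less_power) auto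
  have qs: "qc s t > 0" using qc_pos[OF t s] .
  have qr: "qc r t > 0" using qc_pos[OF t r] .
  have e1: "qc s t / (pc s t * X^q2 + qc s t) = 1" using z qs by simp
  have e2: "1 - (X-2)/(X-1) = 1/(X-1)" using X1 by (simp add: field_simps)
  have "X^h > 1" using X1 h by (intro one_less_power) auto
  hence "X * X^h > X * 1" using X1 by (intro mult_strict_left_mono) auto
  hence "X^(h+1) > X" by simp
  hence e3: "1/(X^(h+1) - 1) < 1/(X-1)"
  proof -
    assume a: "X^(h+1) > X"
    have "X^(h+1) - 1 > 0" "X - 1 > 0" using a X1 by linarith+
    hence "0 < (X^(h+1) - 1) * (X - 1)" by (rule mult_pos_pos)
    thus ?thesis using a X1 by (intro divide_strict_left_mono) auto
  qed
  have e4: "qc r t / (pc r t * X^q1 + qc r t) \<ge> 0" using pr qr X1 by simp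
  show ?thesis unfolding Fn_def X_def[symmetric] using e1 e2 e3 e4 by (simp add: e1)
qed

lemma pref_pos:
  assumes t: "t > 1" and pr: "pc r t \<ge> 0" and ps: "pc s t \<ge> 0" and r: "r \<ge> 2" and s: "s \<ge> 2"
  shows "(t - 1/t) * pth t h * sg r t q1 * sg s t q2 > 0"
proof -
  have t0: "t > 0" using t by simp
  have "1/t < 1" using t by simp
  hence a: "t - 1/t > 0" using t by linarith
  have b: "pth t h > 0" using pth_pos[OF t] .
  have c: "sg r t q1 > 0" using sg_pos[OF t0 pr qc_pos[OF t r]] .
  have d: "sg s t q2 > 0" using sg_pos[OF t0 ps qc_pos[OF t s]] .
  show ?thesis using a b c d by simp
qed

lemma prod0: "(a::real) > 0 \<Longrightarrow> a * b = 0 \<Longrightarrow> b = 0" by simp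

lemma lam_mono: assumes a: "1 < a" and ab: "a < b" shows "lam a < lam b"
proof -
  have "a * b > a * 1" using a ab by (intro mult_strict_left_mono) auto
  hence "a * b > a" by simp
  hence ab1: "a * b > 1" using a by linarith
  have e: "1/a - 1/b = (b - a)/(a*b)" using a ab by (simp add: field_simps)
  have "(b - a)/(a*b) < b - a" using ab1 ab by (simp add: divide_less_eq)
  hence "1/a - 1/b < b - a" using e by simp
  thus ?thesis unfolding lam_def by linarith
qed

theorem lemma5p4:
  fixes r1 r2 n h0 j :: nat
  assumes "2 \<le> r1" and "r1 < r2"
    and "n \<ge> 5 + 2 * (r1 + r2)"
    and "h0 = n - 5 - 2 * (r1 + r2)" and "h0 \<ge> 3"
    and "j \<le> h0 - 3"
  shows "rho_tree r1 r2 2 (h0 - j) (2 + j) > rho_tree r1 r2 (h0 - (j + 1)) 2 (2 + (j + 1))"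
proof -
  have r1: "r1 \<ge> 2" using assms by simp
  have r2: "r2 \<ge> 2" using assms by simp
  have r2': "r2 \<ge> 3" using assms by simp
  have hj: "h0 - j \<ge> 3" using assms by simp
  interpret T1: tctx r1 r2 2 "h0-j" "2+j" by unfold_locales (use hj in auto)
  interpret T2: tctx r1 r2 "h0-(j+1)" 2 "2+(j+1)" by unfold_locales (use hj in auto)
  define S where "S = real r2"
  have S3: "S \<ge> 3" using r2' by (simp add: S_def)
  have p1: "pc r2 1 < 0" using r2 by (simp add: pc_def)
  have pS: "pc r2 S > 0"
  proof -
    have "pc r2 S = S^3*(S-1) + S*(S-1) + 1" unfolding pc_def S_def
      by (simp add: algebra_simps power2_eq_square power3_eq_cube power_numeral_reduce)
    moreover have "S^3*(S-1) \<ge> 0" "S*(S-1) \<ge> 0" using S3 by simp_all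
    ultimately show ?thesis by linarith
  qed
  obtain ta where ta: "1 \<le> ta" "ta \<le> S" "pc r2 ta = 0"
    using IVT'[of "pc r2" 1 0 S] p1 pS S3 pc_cont by auto
  have ta1: "ta > 1" using ta p1 by (cases "ta = 1") auto
  have nonneg: "pc r2 t \<ge> 0 \<and> pc r1 t \<ge> 0" if "ta \<le> t" for t
  proof -
    have "pc r2 t \<ge> 0" using pc_mono_t[OF ta(1) ta(3) that] r2 by simp
    moreover have "pc r2 t \<le> pc r1 t" using pc_mono_r[of r1 r2 t] assms by simp
    ultimately show ?thesis by simp
  qed
  let ?P2 = "Phi r1 r2 (h0-(j+1)) 2 (2+(j+1))"
  let ?P1 = "Phi r1 r2 2 (h0-j) (2+j)"
  have PhiFn2: "?P2 t = (t - 1/t) * pth t (h0-(j+1)) * sg r1 t 2 * sg r2 t (2+(j+1)) * Fn r1 r2 (h0-(j+1)) 2 (2+(j+1)) t"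
    if "ta \<le> t" for t
    using Phi_Fn[of t "h0-(j+1)" 2 "2+(j+1)" r1 r2] nonneg[OF that] ta1 that hj r1 r2 by simp
  have PhiFn1: "?P1 t = (t - 1/t) * pth t 2 * sg r1 t (h0-j) * sg r2 t (2+j) * Fn r1 r2 2 (h0-j) (2+j) t"
    if "ta \<le> t" for t
    using Phi_Fn[of t 2 "h0-j" "2+j" r1 r2] nonneg[OF that] ta1 that hj r1 r2 by simp
  have pref2: "(t - 1/t) * pth t (h0-(j+1)) * sg r1 t 2 * sg r2 t (2+(j+1)) > 0" if "ta \<le> t" for t
    using pref_pos[of t r1 r2] nonneg[OF that] ta1 that r1 r2 by simp
  have pref1: "(t - 1/t) * pth t 2 * sg r1 t (h0-j) * sg r2 t (2+j) > 0" if "ta \<le> t" for t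
    using pref_pos[of t r1 r2] nonneg[OF that] ta1 that r1 r2 by simp
  have Fa: "Fn r1 r2 (h0-(j+1)) 2 (2+(j+1)) ta > 0"
    using Fn_thr[OF ta1 ta(3)] nonneg[of ta] r1 r2 hj by simp
  have Pa: "?P2 ta > 0" using PhiFn2[of ta] pref2[of ta] Fa by simp
  have Fb2: "Fn r1 r2 (h0-(j+1)) 2 (2+(j+1)) S < 0"
    unfolding S_def using Fn_big[of r2 r1] S3 r1 assms by (simp add: S_def)
  have Pb2: "?P2 S < 0" using PhiFn2[of S] pref2[of S] Fb2 ta(2) by (simp add: mult_pos_neg)
  obtain t2 where t2: "ta \<le> t2" "t2 \<le> S" "?P2 t2 = 0"
    using IVT2'[of ?P2 S 0 ta] Pa Pb2 ta(2) Phi_cont[of ta] ta1 by auto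
  have t2a: "t2 > ta" using t2 Pa by (cases "t2 = ta") auto
  have t21: "t2 > 1" using t2a ta1 by simp
  have F2z: "Fn r1 r2 (h0-(j+1)) 2 (2+(j+1)) t2 = 0"
  proof (rule prod0[OF pref2[OF t2(1)]])
    show "(t2 - 1/t2) * pth t2 (h0-(j+1)) * sg r1 t2 2 * sg r2 t2 (2+(j+1)) * Fn r1 r2 (h0-(j+1)) 2 (2+(j+1)) t2 = 0"
      using PhiFn2[OF t2(1)] t2(3) by linarith
  qed
  define X where "X = t2^2"
  have X1: "X > 1" unfolding X_def using t21 by (intro one_less_power) auto
  have e1: "h0 - (j+1) + 1 = h0 - j" using hj by simp
  have e2: "2 + (j+1) = (2+j)+1" by simp
  have F2': "-1/(X^(h0-j) - 1) + qc r1 t2/(pc r1 t2 * X^2 + qc r1 t2)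
      + qc r2 t2/(pc r2 t2 * X^((2+j)+1) + qc r2 t2) - (X-2)/(X-1) = 0"
    using F2z unfolding Fn_def X_def[symmetric] e1 e2 .
  have Xr: "X^2 \<ge> real r1 * (X+1)"
  proof -
    have "pc r2 t2 \<ge> 0" using nonneg[OF t2(1)] by simp
    hence "X^2 \<ge> (real r2 - 1) * (X+1)" unfolding pc_X X_def by simp
    moreover have "real r1 * (X+1) \<le> (real r2 - 1) * (X+1)"
      using assms X1 by (intro mult_right_mono) auto
    ultimately show ?thesis by linarith
  qed
  have key: "-1/(X^3 - 1) + qc r1 t2/(pc r1 t2 * X^(h0-j) + qc r1 t2)
      + qc r2 t2/(pc r2 t2 * X^(2+j) + qc r2 t2) - (X-2)/(X-1) > 0"
    by (rule key_ineq[OF X1 r1 Xr _ _ _ _ hj F2'])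
      (use nonneg[OF t2(1)] qc_pos[OF t21 r2] in \<open>simp_all add: pc_X qc_def X_def\<close>)
  have F1p: "Fn r1 r2 2 (h0-j) (2+j) t2 > 0"
    using key unfolding Fn_def X_def[symmetric] by (simp add: numeral_3_eq_3)
  have P1a: "?P1 t2 > 0" using PhiFn1[OF t2(1)] pref1[OF t2(1)] F1p by simp
  have Fb1: "Fn r1 r2 2 (h0-j) (2+j) S < 0"
    unfolding S_def using Fn_big[of r2 r1] S3 r1 assms by (simp add: S_def)
  have Pb1: "?P1 S < 0" using PhiFn1[of S] pref1[of S] Fb1 ta(2) by (simp add: mult_pos_neg)
  have t2ta: "ta \<le> t2" using t2(1) .
  obtain t1 where t1: "t2 \<le> t1" "t1 \<le> S" "?P1 t1 = 0"
    using IVT2'[of ?P1 S 0 t2] P1a Pb1 t2(2) Phi_cont[of t2] t21 by auto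
  have t12: "t1 > t2" using t1 P1a by (cases "t1 = t2") auto
  have t11: "t1 > 1" using t12 t21 by simp
  have t1a: "ta \<le> t1" using t12 t2a by simp
  have ev1: "eigenvalue (adj_mat T1.NN (tree_edges r1 r2 2 (h0-j) (2+j))) (lam t1)"
    using T1.tvec_eigenvalue[OF t11 t1(3) r1 r2] nonneg[OF t1a] by simp
  have ev2: "eigenvalue (adj_mat T2.NN (tree_edges r1 r2 (h0-(j+1)) 2 (2+(j+1)))) (lam t2)"
    using T2.tvec_eigenvalue[OF t21 t2(3) r1 r2] nonneg[OF t2(1)] by simp
  have up2: "\<mu> \<le> lam t2" if "eigenvalue (adj_mat T2.NN (tree_edges r1 r2 (h0-(j+1)) 2 (2+(j+1)))) \<mu>" for \<mu>
  proof -
    have Av: "adj_mat T2.NN (tree_edges r1 r2 (h0-(j+1)) 2 (2+(j+1))) *\<^sub>v T2.tvec t2 = lam t2 \<cdot>\<^sub>v T2.tvec t2"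
      by (rule T2.tvec_eig[OF t21 t2(3)])
    have "\<bar>\<mu>\<bar> \<le> lam t2"
    proof (rule collatz_upper(2)[OF adj_mat_carrier _ _ _ _ that])
      show "\<And>a b. a < T2.NN \<Longrightarrow> b < T2.NN \<Longrightarrow> adj_mat T2.NN (tree_edges r1 r2 (h0-(j+1)) 2 (2+(j+1))) $$ (a,b) \<ge> 0"
        by (rule adj_mat_nonneg)
      show "T2.tvec t2 \<in> carrier_vec T2.NN" unfolding T2.tvec_def by simp
      show "\<And>i. i < T2.NN \<Longrightarrow> T2.tvec t2 $ i > 0"
        using T2.tval_pos[OF t21 r1 r2] nonneg[OF t2(1)] unfolding T2.tvec_def by simp
      show "\<And>i. i < T2.NN \<Longrightarrow> (adj_mat T2.NN (tree_edges r1 r2 (h0-(j+1)) 2 (2+(j+1))) *\<^sub>v T2.tvec t2) $ i \<le> lam t2 * T2.tvec t2 $ i"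
      proof -
        fix i assume i: "i < T2.NN"
        have "(adj_mat T2.NN (tree_edges r1 r2 (h0-(j+1)) 2 (2+(j+1))) *\<^sub>v T2.tvec t2) $ i = (lam t2 \<cdot>\<^sub>v T2.tvec t2) $ i"
          unfolding Av ..
        also have "\<dots> = lam t2 * T2.tvec t2 $ i" using i unfolding T2.tvec_def by simp
        finally show "(adj_mat T2.NN (tree_edges r1 r2 (h0-(j+1)) 2 (2+(j+1))) *\<^sub>v T2.tvec t2) $ i \<le> lam t2 * T2.tvec t2 $ i" by simp
      qed
    qed
    thus ?thesis using abs_ge_self[of \<mu>] by linarith
  qed
  have fin1: "finite {x. eigenvalue (adj_mat T1.NN (tree_edges r1 r2 2 (h0-j) (2+j))) x}"
    by (rule finite_eigs[OF adj_mat_carrier])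
  have fin2: "finite {x. eigenvalue (adj_mat T2.NN (tree_edges r1 r2 (h0-(j+1)) 2 (2+(j+1)))) x}"
    by (rule finite_eigs[OF adj_mat_carrier])
  have R1: "rho_tree r1 r2 2 (h0 - j) (2 + j) \<ge> lam t1"
    unfolding rho_tree_def spec_rad_def T1.order_eq using fin1 ev1 by (intro Max_ge) simp_all
  have R2: "rho_tree r1 r2 (h0 - (j + 1)) 2 (2 + (j + 1)) = lam t2"
    unfolding rho_tree_def spec_rad_def T2.order_eq
  proof (rule Max_eqI)
    show "finite {x. eigenvalue (adj_mat T2.NN (tree_edges r1 r2 (h0-(j+1)) 2 (2+(j+1)))) x}" by (rule fin2)
    show "\<And>y. y \<in> {x. eigenvalue (adj_mat T2.NN (tree_edges r1 r2 (h0-(j+1)) 2 (2+(j+1)))) x} \<Longrightarrow> y \<le> lam t2"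
      using up2 by simp
    show "lam t2 \<in> {x. eigenvalue (adj_mat T2.NN (tree_edges r1 r2 (h0-(j+1)) 2 (2+(j+1)))) x}" using ev2 by simp
  qed
  have "lam t2 < lam t1" by (rule lam_mono[OF t21 t12])
  thus ?thesis using R1 R2 by linarith
qed

end
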